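(* There is a regular language $L$ such that ${\rm pssr}(L)$ is not regular; for instance $L=0^+10^+$, for which ${\rm pssr}(L)\cap 0^+110^+=\{0^n110^n : n\ge 2\}$.
   Context: For words $x=a_1\cdots a_n$, $y=b_1\cdots b_n$ of the same length, the perfect shuffle is $x\,\text{sh}\,y=a_1b_1a_2b_2\cdots a_nb_n$. $x^R$ denotes the reversal of $x$. For a language $L$, ${\rm pssr}(L)=\{x\,\text{sh}\,x^R : x\in L\}$. *)

theory Defs
  imports Main
begin

datatype bin = B0 | B1

definition regular :: "'a list set \<Rightarrow> bool" where
  "regular L \<longleftrightarrow> (\<exists>(Q::nat set) (\<delta>::nat \<Rightarrow> 'a \<Rightarrow> nat) q0 F.
      finite Q \<and> q0 \<in> Q \<and> F \<subseteq> Q \<and> (\<forall>q\<in>Q. \<forall>a. \<delta> q a \<in> Q) \<and>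
      L = {w. foldl \<delta> q0 w \<in> F})"

fun psh :: "'a list \<Rightarrow> 'a list \<Rightarrow> 'a list" where
  "psh (a # x) (b # y) = a # b # psh x y"
| "psh _ _ = []"

definition pssr :: "'a list set \<Rightarrow> 'a list set" where
  "pssr L = {psh x (rev x) | x. x \<in> L}"

definition L0 :: "bin list set" where
  "L0 = {replicate m B0 @ [B1] @ replicate n B0 | m n. m \<ge> 1 \<and> n \<ge> 1}"

definition L011 :: "bin list set" where
  "L011 = {replicate m B0 @ [B1, B1] @ replicate n B0 | m n. m \<ge> 1 \<and> n \<ge> 1}"

end

theory Submission
  imports Defs
begin

fun dl :: "nat \<Rightarrow> bin \<Rightarrow> nat" where
  "dl 0 B0 = 1" | "dl 0 B1 = 4"
| "dl (Suc 0) B0 = 1" | "dl (Suc 0) B1 = 2"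
| "dl (Suc (Suc 0)) B0 = 3" | "dl (Suc (Suc 0)) B1 = 4"
| "dl (Suc (Suc (Suc 0))) B0 = 3" | "dl (Suc (Suc (Suc 0))) B1 = 4"
| "dl _ _ = 4"

lemma dl4: "foldl dl 4 w = 4"
  by (induction w) (auto simp: numeral_eq_Suc)

lemma dl4': "foldl dl (Suc (Suc (Suc (Suc 0)))) w = Suc (Suc (Suc (Suc 0)))"
  using dl4 by (simp add: numeral_eq_Suc)

lemma nob1: "B1 \<notin> set w \<longleftrightarrow> w = replicate (length w) B0"
proof (induction w)
  case (Cons a w) then show ?case by (cases a) auto
qed simp

lemma dl3: "foldl dl 3 w = 3 \<longleftrightarrow> B1 \<notin> set w"
proof (induction w)
  case (Cons a w) then show ?case by (cases a) (auto simp: numeral_eq_Suc dl4')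
qed simp

lemma dl2: "foldl dl 2 w = 3 \<longleftrightarrow> w \<noteq> [] \<and> B1 \<notin> set w"
proof (cases w)
  case (Cons a w') then show ?thesis using dl3 dl4
    by (cases a) (auto simp: numeral_eq_Suc)
qed (simp add: numeral_eq_Suc)

lemma dl1: "foldl dl 1 w = 3 \<longleftrightarrow> (\<exists>m n. w = replicate m B0 @ B1 # replicate n B0 \<and> n \<ge> 1)"
proof (induction w)
  case Nil then show ?case by simp
next
  case (Cons a w)
  show ?case
  proof (cases a)
    case B0
    have "(\<exists>m n. B0 # w = replicate m B0 @ B1 # replicate n B0 \<and> n \<ge> 1)
       \<longleftrightarrow> (\<exists>m n. w = replicate m B0 @ B1 # replicate n B0 \<and> n \<ge> 1)"
    proof
      assume "\<exists>m n. B0 # w = replicate m B0 @ B1 # replicate n B0 \<and> n \<ge> 1"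
      then obtain m n where h: "B0 # w = replicate m B0 @ B1 # replicate n B0" "n \<ge> 1" by blast
      then show "\<exists>m n. w = replicate m B0 @ B1 # replicate n B0 \<and> n \<ge> 1"
        by (cases m) auto
    next
      assume "\<exists>m n. w = replicate m B0 @ B1 # replicate n B0 \<and> n \<ge> 1"
      then obtain m n where h: "w = replicate m B0 @ B1 # replicate n B0" "n \<ge> 1" by blast
      then show "\<exists>m n. B0 # w = replicate m B0 @ B1 # replicate n B0 \<and> n \<ge> 1"
        by (intro exI[of _ "Suc m"] exI[of _ n]) auto
    qed
    then show ?thesis using Cons B0 by simp
  next
    case B1
    have "(\<exists>m n. B1 # w = replicate m B0 @ B1 # replicate n B0 \<and> n \<ge> 1)
       \<longleftrightarrow> (w \<noteq> [] \<and> B1 \<notin> set w)"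
    proof
      assume "\<exists>m n. B1 # w = replicate m B0 @ B1 # replicate n B0 \<and> n \<ge> 1"
      then obtain m n where h: "B1 # w = replicate m B0 @ B1 # replicate n B0" "n \<ge> 1" by blast
      then show "w \<noteq> [] \<and> B1 \<notin> set w"
        by (cases m) auto
    next
      assume "w \<noteq> [] \<and> B1 \<notin> set w"
      then have "w = replicate (length w) B0" "length w \<ge> 1" using nob1 by (auto simp: Suc_le_eq)
      then show "\<exists>m n. B1 # w = replicate m B0 @ B1 # replicate n B0 \<and> n \<ge> 1"
        by (intro exI[of _ 0] exI[of _ "length w"]) auto
    qed
    then show ?thesis using B1 dl2 by (simp add: numeral_eq_Suc)
  qed
qed

lemma regL0: "regular L0"
proof -
  have "L0 = {w. foldl dl 0 w \<in> {3}}"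
  proof (intro set_eqI iffI)
    fix w assume "w \<in> L0"
    then obtain m n where h: "w = replicate m B0 @ [B1] @ replicate n B0" "m \<ge> 1" "n \<ge> 1"
      unfolding L0_def by blast
    then obtain m' where "m = Suc m'" by (cases m) auto
    then have "foldl dl 0 w = foldl dl 1 (replicate m' B0 @ B1 # replicate n B0)" using h by simp
    also have "\<dots> = 3" using dl1 h by blast
    finally show "w \<in> {w. foldl dl 0 w \<in> {3}}" by simp
  next
    fix w assume "w \<in> {w. foldl dl 0 w \<in> {3}}"
    then have h: "foldl dl 0 w = 3" by simp
    then obtain a w' where w: "w = a # w'" by (cases w) auto
    show "w \<in> L0"
    proof (cases a)
      case B0
      then have "foldl dl 1 w' = 3" using h w by simp
      then obtain m n where "w' = replicate m B0 @ B1 # replicate n B0" "n \<ge> 1" using dl1 by blast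
      then show ?thesis unfolding L0_def using w B0
        by (intro CollectI exI[of _ "Suc m"] exI[of _ n]) auto
    next
      case B1
      then show ?thesis using h w dl4 by (simp add: numeral_eq_Suc)
    qed
  qed
  moreover have "\<forall>q\<in>{0..4::nat}. \<forall>a. dl q a \<in> {0..4}"
  proof (intro ballI allI)
    fix q :: nat and a assume "q \<in> {0..4}"
    then have "q = 0 \<or> q = 1 \<or> q = 2 \<or> q = 3 \<or> q = 4" by auto
    then show "dl q a \<in> {0..4}" by (cases a) (auto simp: numeral_eq_Suc)
  qed
  ultimately show ?thesis unfolding regular_def
    by (intro exI[of _ "{0..4}"] exI[of _ dl] exI[of _ 0] exI[of _ "{3}"]) auto
qed

lemma pshA: "psh (replicate a B0 @ u) (replicate a B0 @ v) = replicate (2*a) B0 @ psh u v"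
  by (induction a) auto

lemma pshB: "length u = length v \<Longrightarrow> psh (u @ w) (v @ w') = psh u v @ psh w w'"
  by (induction u v rule: list_induct2) auto

lemma pshR: "psh (replicate a B0) (replicate a B0) = replicate (2*a) B0"
  using pshA[of a "[]" "[]"] by simp

lemma uniq: "replicate a B0 @ B1 # u = replicate c B0 @ B1 # v \<Longrightarrow> a = c \<and> u = v"
proof (induction a arbitrary: c)
  case 0 then show ?case by (cases c) auto
next
  case (Suc a) then show ?case by (cases c) auto
qed

lemma word1: "psh (replicate m B0 @ B1 # replicate (m+d) B0) (rev (replicate m B0 @ B1 # replicate (m+d) B0))
   = replicate (2*m) B0 @ psh (B1 # replicate d B0) (replicate d B0 @ [B1]) @ replicate (2*m) B0"
proof -
  have x: "replicate m B0 @ B1 # replicate (m+d) B0 = replicate m B0 @ ((B1 # replicate d B0) @ replicate m B0)"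
    by (simp add: add.commute[of m d] replicate_add)
  have r: "rev (replicate m B0 @ B1 # replicate (m+d) B0) = replicate m B0 @ ((replicate d B0 @ [B1]) @ replicate m B0)"
    by (simp add: add.commute[of m d] replicate_add)
  show ?thesis unfolding r unfolding x pshA
    by (subst pshB) (simp_all add: pshR)
qed

lemma word2: "psh (replicate (n+d) B0 @ B1 # replicate n B0) (rev (replicate (n+d) B0 @ B1 # replicate n B0))
   = replicate (2*n) B0 @ psh (replicate d B0 @ [B1]) (B1 # replicate d B0) @ replicate (2*n) B0"
proof -
  have x: "replicate (n+d) B0 @ B1 # replicate n B0 = replicate n B0 @ ((replicate d B0 @ [B1]) @ replicate n B0)"
    by (simp add: replicate_add)
  have r: "rev (replicate (n+d) B0 @ B1 # replicate n B0) = replicate n B0 @ ((B1 # replicate d B0) @ replicate n B0)"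
    by (simp add: replicate_add)
  show ?thesis unfolding r unfolding x pshA
    by (subst pshB) (simp_all add: pshR)
qed

lemma mid1: "psh (B1 # replicate (Suc e) B0) (replicate (Suc e) B0 @ [B1]) = B1 # B0 # replicate (2*e) B0 @ [B0, B1]"
proof -
  have e1: "replicate (Suc e) B0 = replicate e B0 @ [B0]" by (simp add: replicate_append_same)
  have e2: "replicate (Suc e) B0 @ [B1] = B0 # (replicate e B0 @ [B1])" by simp
  have "psh (B1 # replicate (Suc e) B0) (replicate (Suc e) B0 @ [B1]) = B1 # B0 # psh (replicate e B0 @ [B0]) (replicate e B0 @ [B1])"
    unfolding e2 by (subst e1) simp
  also have "\<dots> = B1 # B0 # replicate (2*e) B0 @ [B0, B1]" by (subst pshB) (simp_all add: pshR)
  finally show ?thesis .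
qed

lemma mid2: "psh (replicate (Suc e) B0 @ [B1]) (B1 # replicate (Suc e) B0) = B0 # B1 # replicate (2*e) B0 @ [B1, B0]"
proof -
  have e1: "replicate (Suc e) B0 = replicate e B0 @ [B0]" by (simp add: replicate_append_same)
  have e2: "replicate (Suc e) B0 @ [B1] = B0 # (replicate e B0 @ [B1])" by simp
  have "psh (replicate (Suc e) B0 @ [B1]) (B1 # replicate (Suc e) B0) = B0 # B1 # psh (replicate e B0 @ [B1]) (replicate e B0 @ [B0])"
    unfolding e2 by (subst e1) simp
  also have "\<dots> = B0 # B1 # replicate (2*e) B0 @ [B1, B0]" by (subst pshB) (simp_all add: pshR)
  finally show ?thesis .
qed

lemma inter: "pssr L0 \<inter> L011 = {replicate n B0 @ [B1, B1] @ replicate n B0 | n. n \<ge> 2}"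
proof (intro set_eqI iffI)
  fix w assume "w \<in> pssr L0 \<inter> L011"
  then obtain m n a b where w1: "w = psh (replicate m B0 @ [B1] @ replicate n B0) (rev (replicate m B0 @ [B1] @ replicate n B0))"
    and mn: "m \<ge> 1" "n \<ge> 1" and w2: "w = replicate a B0 @ [B1, B1] @ replicate b B0"
    unfolding pssr_def L0_def L011_def by blast
  show "w \<in> {replicate n B0 @ [B1, B1] @ replicate n B0 | n. n \<ge> 2}"
  proof (cases "m \<le> n")
    case True
    then obtain d where d: "n = m + d" using le_Suc_ex by blast
    show ?thesis
    proof (cases d)
      case 0
      then have "w = replicate (2*m) B0 @ [B1, B1] @ replicate (2*m) B0"
        using w1 word1[of m 0] d by simp
      then show ?thesis using mn by auto
    next
      case (Suc e)
      then have "w = replicate (2*m) B0 @ B1 # (B0 # replicate (2*e) B0 @ [B0, B1] @ replicate (2*m) B0)"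
        using w1 word1[of m d] d mid1 by simp
      with w2 have "replicate a B0 @ B1 # (B1 # replicate b B0) = replicate (2*m) B0 @ B1 # (B0 # replicate (2*e) B0 @ [B0, B1] @ replicate (2*m) B0)"
        by simp
      from uniq[OF this] show ?thesis by simp
    qed
  next
    case False
    then obtain e where d: "m = n + Suc e" by (metis add_Suc_right le_add1 less_imp_Suc_add not_le)
    have rr: "replicate (2*n) B0 @ B0 # u = replicate (Suc (2*n)) B0 @ u" for u
      by (simp add: replicate_app_Cons_same)
    have ww: "w = replicate (Suc (2*n)) B0 @ B1 # (replicate (2*e) B0 @ B1 # B0 # replicate (2*n) B0)"
      using w1 word2[of n "Suc e"] d mid2[of e] rr by simp
    with w2 have "replicate a B0 @ B1 # (B1 # replicate b B0) = replicate (Suc (2*n)) B0 @ B1 # (replicate (2*e) B0 @ B1 # B0 # replicate (2*n) B0)"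
      by simp
    from uniq[OF this] have h: "a = Suc (2*n)" "B1 # replicate b B0 = replicate (2*e) B0 @ B1 # B0 # replicate (2*n) B0"
      by auto
    have "e = 0" using h(2) by (cases e) auto
    then have "w = replicate (Suc (2*n)) B0 @ [B1, B1] @ replicate (Suc (2*n)) B0"
      using ww by simp
    then show ?thesis using mn by (intro CollectI exI[of _ "Suc (2*n)"]) auto
  qed
next
  fix w assume "w \<in> {replicate n B0 @ [B1, B1] @ replicate n B0 | n. n \<ge> 2}"
  then obtain j where w: "w = replicate j B0 @ [B1, B1] @ replicate j B0" and j: "j \<ge> 2" by blast
  have "w \<in> L011" unfolding L011_def using w j
    by (intro CollectI exI[of _ j]) auto
  moreover have "w \<in> pssr L0"
  proof (cases "even j")
    case True
    then obtain m where m: "j = 2*m" by blast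
    have "w = psh (replicate m B0 @ B1 # replicate (m+0) B0) (rev (replicate m B0 @ B1 # replicate (m+0) B0))"
      unfolding word1 using w m by simp
    moreover have "replicate m B0 @ B1 # replicate (m+0) B0 \<in> L0" unfolding L0_def using m j by force
    ultimately show ?thesis unfolding pssr_def by blast
  next
    case False
    then obtain n where n: "j = Suc (2*n)" by (metis oddE add.commute plus_1_eq_Suc)
    have rr: "replicate (2*n) B0 @ B0 # u = replicate (Suc (2*n)) B0 @ u" for u
      by (simp add: replicate_app_Cons_same)
    have "w = psh (replicate (n+Suc 0) B0 @ B1 # replicate n B0) (rev (replicate (n+Suc 0) B0 @ B1 # replicate n B0))"
      unfolding word2 mid2 using w n rr by simp
    moreover have "replicate (n+Suc 0) B0 @ B1 # replicate n B0 \<in> L0" unfolding L0_def using n j by force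
    ultimately show ?thesis unfolding pssr_def by blast
  qed
  ultimately show "w \<in> pssr L0 \<inter> L011" by blast
qed

lemma nonreg: "\<not> regular (pssr L0)"
proof
  assume "regular (pssr L0)"
  then obtain Q :: "nat set" and \<delta> :: "nat \<Rightarrow> bin \<Rightarrow> nat" and q0 F where
    fin: "finite Q" and q0: "q0 \<in> Q" and cl: "\<forall>q\<in>Q. \<forall>a. \<delta> q a \<in> Q" and
    L: "pssr L0 = {w. foldl \<delta> q0 w \<in> F}"
    unfolding regular_def by blast
  have inQ: "q \<in> Q \<Longrightarrow> foldl \<delta> q w \<in> Q" for q w
    by (induction w arbitrary: q) (auto simp: cl)
  define f where "f j = foldl \<delta> q0 (replicate (j+2) B0)" for j
  have "f j \<in> Q" for j unfolding f_def by (rule inQ[OF q0])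
  then have "range f \<subseteq> Q" by auto
  then have "\<not> inj f" using fin finite_imageD[of f UNIV] finite_subset by auto
  then obtain i j where ij: "i \<noteq> j" "f i = f j" unfolding inj_def by blast
  let ?u = "[B1, B1] @ replicate (i+2) B0"
  have "replicate (i+2) B0 @ ?u \<in> {replicate n B0 @ [B1, B1] @ replicate n B0 | n. n \<ge> 2}"
    by (intro CollectI exI[of _ "i+2"]) simp
  then have "replicate (i+2) B0 @ ?u \<in> pssr L0" using inter by blast
  then have "foldl \<delta> q0 (replicate (i+2) B0 @ ?u) \<in> F" using L by blast
  then have "foldl \<delta> (f i) ?u \<in> F" unfolding f_def foldl_append .
  then have "foldl \<delta> (f j) ?u \<in> F" using ij by simp
  then have "foldl \<delta> q0 (replicate (j+2) B0 @ ?u) \<in> F" unfolding f_def foldl_append .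
  then have "replicate (j+2) B0 @ ?u \<in> pssr L0" using L by blast
  moreover have "replicate (j+2) B0 @ ?u \<in> L011" unfolding L011_def
    by (intro CollectI exI[of _ "j+2"] exI[of _ "i+2"]) simp
  ultimately have "replicate (j+2) B0 @ ?u \<in> {replicate n B0 @ [B1, B1] @ replicate n B0 | n. n \<ge> 2}"
    using inter by blast
  then obtain n where "replicate (j+2) B0 @ B1 # (B1 # replicate (i+2) B0) = replicate n B0 @ B1 # (B1 # replicate n B0)"
    by auto
  from uniq[OF this] have "j + 2 = n" "i + 2 = n" by auto
  with ij show False by simp
qed

theorem mainTheorem6:
  shows "(\<exists>L :: bin list set. regular L \<and> \<not> regular (pssr L))
    \<and> regular L0 \<and> \<not> regular (pssr L0)
    \<and> pssr L0 \<inter> L011 = {replicate n B0 @ [B1, B1] @ replicate n B0 | n. n \<ge> 2}"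
proof (intro conjI)
  show "\<exists>L :: bin list set. regular L \<and> \<not> regular (pssr L)" using regL0 nonreg by blast
qed (rule regL0, rule nonreg, rule inter)

end
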